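(* Consider the network system of the context with each $v_i$ measurable, and suppose every subcontroller is of the form $u_i=\hat K_iR_i\begin{bmatrix} y_i\\ v_i\end{bmatrix}$ with $R_i:=\begin{bmatrix} I&-G_{y_iv_i}\end{bmatrix}$ and $\hat K_i$ a stabilizing controller for $G_{y_iu_i}$. Then, for any interaction $\boldsymbol L$ such that $\boldsymbol G_{\rm pre}$ is internally stable, the closed-loop map $\boldsymbol T_{\boldsymbol{zd}}:\boldsymbol d\mapsto\boldsymbol z$ of the entire network system satisfies $$\boldsymbol T_{\boldsymbol{zd}}=\mathrm{diag}\big(\hat M_{z_id_i}(\hat K_i)\big)+\boldsymbol G_{\boldsymbol{zv}}(I-\boldsymbol L\boldsymbol G_{\boldsymbol{wv}})^{-1}\boldsymbol L\,\mathrm{diag}\big(\hat M_{w_id_i}(\hat K_i)\big),$$ where $\hat M_{z_id_i}(\hat K_i):=G_{z_id_i}+G_{z_iu_i}\hat K_i(I-G_{y_iu_i}\hat K_i)^{-1}G_{y_id_i}$ and $\hat M_{w_id_i}(\hat K_i):=G_{w_id_i}+G_{w_iu_i}\hat K_i(I-G_{y_iu_i}\hat K_i)^{-1}G_{y_id_i}$.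
   Context: For $i=1,\dots,N$, subsystem $G_i$ is a proper real rational transfer matrix with inputs $(v_i,d_i,u_i)$ (interaction, disturbance, control) and outputs $(w_i,z_i,y_i)$ (interaction, evaluation, measurement), $G_{a_ib_i}$ denoting the block from $b_i$ to $a_i$. Stacked signals $\boldsymbol v=\mathrm{col}(v_1,\dots,v_N)$ etc.; the interaction is $\boldsymbol v=\boldsymbol L\boldsymbol w$ with $\boldsymbol L$ a proper real rational transfer matrix. $\boldsymbol G_{\boldsymbol{wv}}:=\mathrm{diag}(G_{w_iv_i})$, $\boldsymbol G_{\boldsymbol{zv}}:=\mathrm{diag}(G_{z_iv_i})$. The preexisting system $\boldsymbol G_{\rm pre}$ is the loop $\boldsymbol w=\boldsymbol G_{\boldsymbol{wv}}\boldsymbol v$, $\boldsymbol v=\boldsymbol L\boldsymbol w$. All feedback systems are well-posed; internal stability is standard. $\hat K_i$ is a stabilizing controller for $G_{y_iu_i}$ if the positive feedback loop $y_i=G_{y_iu_i}u_i$, $u_i=\hat K_iy_i$ is internally stable. *)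

theory Defs
  imports Complex_Main "HOL-Computational_Algebra.Polynomial"
    "HOL-Computational_Algebra.Fraction_Field" "Jordan_Normal_Form.Matrix"
begin

text \<open>Real rational transfer functions: the field of fractions of real polynomials
  (in the Laplace variable s).\<close>
type_synonym rf = "real poly fract"

definition proper_rat :: "rf \<Rightarrow> bool" where
  "proper_rat f \<longleftrightarrow> (\<exists>p q. q \<noteq> 0 \<and> f = Fract p q \<and> degree p \<le> degree q)"

definition stable_rat :: "rf \<Rightarrow> bool" where
  "stable_rat f \<longleftrightarrow> (\<exists>p q. q \<noteq> 0 \<and> f = Fract p q \<and> degree p \<le> degree q \<and>
      (\<forall>s::complex. 0 \<le> Re s \<longrightarrow> poly (map_poly complex_of_real q) s \<noteq> 0))"

definition proper_mat :: "rf mat \<Rightarrow> bool" where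
  "proper_mat A \<longleftrightarrow> (\<forall>i<dim_row A. \<forall>j<dim_col A. proper_rat (A $$ (i,j)))"

definition stable_mat :: "rf mat \<Rightarrow> bool" where
  "stable_mat A \<longleftrightarrow> (\<forall>i<dim_row A. \<forall>j<dim_col A. stable_rat (A $$ (i,j)))"

text \<open>Matrix inverse (meaningful for invertible square matrices).\<close>
definition minv :: "'a::field mat \<Rightarrow> 'a mat" where
  "minv A = (SOME B. inverts_mat A B \<and> inverts_mat B A)"

text \<open>Internal stability of the positive feedback loop  y = G u + r2,  u = K y + r1:
  well-posed (I - G K invertible) and all four closed-loop maps from (r1,r2) to (y,u) stable.\<close>
definition int_stable_fb :: "rf mat \<Rightarrow> rf mat \<Rightarrow> bool" where
  "int_stable_fb G K \<longleftrightarrow>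
     dim_row K = dim_col G \<and> dim_col K = dim_row G \<and>
     invertible_mat (1\<^sub>m (dim_row G) - G * K) \<and>
     (let X = minv (1\<^sub>m (dim_row G) - G * K) in
        stable_mat X \<and> stable_mat (X * G) \<and> stable_mat (K * X) \<and>
        stable_mat (1\<^sub>m (dim_col G) + K * X * G))"

definition bdiag :: "nat \<Rightarrow> (nat \<Rightarrow> 'a::zero mat) \<Rightarrow> 'a mat" where
  "bdiag N A = foldr (\<lambda>i acc. four_block_mat (A i) (0\<^sub>m (dim_row (A i)) (dim_col acc))
                                  (0\<^sub>m (dim_row acc) (dim_col (A i))) acc) [0..<N] (0\<^sub>m 0 0)"

definition Mhat :: "rf mat \<Rightarrow> rf mat \<Rightarrow> rf mat \<Rightarrow> rf mat \<Rightarrow> rf mat \<Rightarrow> rf mat" where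
  "Mhat Gad Gau Gyu Gyd K = Gad + Gau * K * minv (1\<^sub>m (dim_row Gyu) - Gyu * K) * Gyd"

text \<open>Loop equations of the whole network (stacked signals, block-diagonal plant blocks),
  with controller u = K_hat R [y; v] = K_hat (y - G_yv v) and interaction v = L w.
  The tuple is (v, w, z, y, u).\<close>
definition net_eqs ::
  "rf mat \<Rightarrow> rf mat \<Rightarrow> rf mat \<Rightarrow> rf mat \<Rightarrow> rf mat \<Rightarrow> rf mat \<Rightarrow> rf mat \<Rightarrow> rf mat \<Rightarrow> rf mat
   \<Rightarrow> rf mat \<Rightarrow> rf mat \<Rightarrow> rf vec \<Rightarrow> rf vec \<times> rf vec \<times> rf vec \<times> rf vec \<times> rf vec \<Rightarrow> bool" where
  "net_eqs Gwv Gwd Gwu Gzv Gzd Gzu Gyv Gyd Gyu K L d s \<longleftrightarrow>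
     (case s of (v, w, z, y, u) \<Rightarrow>
       v \<in> carrier_vec (dim_col Gwv) \<and> w \<in> carrier_vec (dim_row Gwv) \<and>
       z \<in> carrier_vec (dim_row Gzv) \<and> y \<in> carrier_vec (dim_row Gyv) \<and>
       u \<in> carrier_vec (dim_col Gwu) \<and>
       w = Gwv *\<^sub>v v + Gwd *\<^sub>v d + Gwu *\<^sub>v u \<and>
       z = Gzv *\<^sub>v v + Gzd *\<^sub>v d + Gzu *\<^sub>v u \<and>
       y = Gyv *\<^sub>v v + Gyd *\<^sub>v d + Gyu *\<^sub>v u \<and>
       u = K *\<^sub>v (y - Gyv *\<^sub>v v) \<and>
       v = L *\<^sub>v w)"

definition is_closed_loop_map ::
  "(rf vec \<Rightarrow> rf vec \<times> rf vec \<times> rf vec \<times> rf vec \<times> rf vec \<Rightarrow> bool) \<Rightarrow> nat \<Rightarrow> rf mat \<Rightarrow> bool" where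
  "is_closed_loop_map eqs nd T \<longleftrightarrow> dim_col T = nd \<and>
     (\<forall>d \<in> carrier_vec nd. (\<exists>!s. eqs d s) \<and>
        (\<forall>v w z y u. eqs d (v, w, z, y, u) \<longrightarrow> z = T *\<^sub>v d))"

end

theory Submission
  imports Defs
begin


lemma bdiag_0[simp]: "bdiag 0 A = 0\<^sub>m 0 0" by (simp add: bdiag_def)

lemma bdiag_Suc: "bdiag (Suc N) A = (let B = bdiag N (\<lambda>i. A (Suc i)) in
   four_block_mat (A 0) (0\<^sub>m (dim_row (A 0)) (dim_col B)) (0\<^sub>m (dim_row B) (dim_col (A 0))) B)"
proof -
  have "[0..<Suc N] = 0 # map Suc [0..<N]" by (simp add: map_Suc_upt upt_conv_Cons)
  then show ?thesis unfolding bdiag_def by (simp add: foldr_map o_def Let_def)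
qed

lemma bdiag_carrier: "(\<And>i. i < N \<Longrightarrow> A i \<in> carrier_mat (r i) (c i)) \<Longrightarrow>
   bdiag N A \<in> carrier_mat (\<Sum>i<N. r i) (\<Sum>i<N. c i)"
proof (induction N arbitrary: A r c)
  case 0 then show ?case by simp
next
  case (Suc N)
  have "bdiag N (\<lambda>i. A (Suc i)) \<in> carrier_mat (\<Sum>i<N. r (Suc i)) (\<Sum>i<N. c (Suc i))"
    using Suc by auto
  moreover have "A 0 \<in> carrier_mat (r 0) (c 0)" using Suc by auto
  ultimately show ?case unfolding bdiag_Suc Let_def sum.lessThan_Suc_shift
    by (intro four_block_carrier_mat) auto
qed

lemma bdiag_mult: "(\<And>i. i < N \<Longrightarrow> A i \<in> carrier_mat (r i) (m i)) \<Longrightarrow>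
   (\<And>i. i < N \<Longrightarrow> B i \<in> carrier_mat (m i) (c i)) \<Longrightarrow>
   bdiag N A * bdiag N B = bdiag N (\<lambda>i. A i * B i)"
proof (induction N arbitrary: A B r m c)
  case 0 then show ?case by simp
next
  case (Suc N)
  have IH: "bdiag N (\<lambda>i. A (Suc i)) * bdiag N (\<lambda>i. B (Suc i)) = bdiag N (\<lambda>i. A (Suc i) * B (Suc i))"
    using Suc by (intro Suc.IH[of _ "\<lambda>i. r (Suc i)" "\<lambda>i. m (Suc i)" _ "\<lambda>i. c (Suc i)"]) auto
  have cA: "bdiag N (\<lambda>i. A (Suc i)) \<in> carrier_mat (\<Sum>i<N. r (Suc i)) (\<Sum>i<N. m (Suc i))"
    using Suc by (intro bdiag_carrier) auto
  have cB: "bdiag N (\<lambda>i. B (Suc i)) \<in> carrier_mat (\<Sum>i<N. m (Suc i)) (\<Sum>i<N. c (Suc i))"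
    using Suc by (intro bdiag_carrier) auto
  have cAB: "bdiag N (\<lambda>i. A (Suc i) * B (Suc i)) \<in> carrier_mat (\<Sum>i<N. r (Suc i)) (\<Sum>i<N. c (Suc i))"
    using Suc.prems by (intro bdiag_carrier mult_carrier_mat) auto
  have a0: "A 0 \<in> carrier_mat (r 0) (m 0)" and b0: "B 0 \<in> carrier_mat (m 0) (c 0)" using Suc by auto
  show ?case
    unfolding bdiag_Suc Let_def
    apply (subst mult_four_block_mat[OF a0 _ _ cA b0 _ _ cB])
    using a0 b0 cA cB cAB IH by (auto)
qed

lemma zero_add_zero_mat[simp]: "0\<^sub>m n m + 0\<^sub>m n m = (0\<^sub>m n m :: 'a::monoid_add mat)"
  by (rule eq_matI) auto

lemma bdiag_add: "(\<And>i. i < N \<Longrightarrow> A i \<in> carrier_mat (r i) (c i)) \<Longrightarrow>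
   (\<And>i. i < N \<Longrightarrow> B i \<in> carrier_mat (r i) (c i)) \<Longrightarrow>
   bdiag N A + bdiag N (B :: nat \<Rightarrow> 'a::monoid_add mat) = bdiag N (\<lambda>i. A i + B i)"
proof (induction N arbitrary: A B r c)
  case 0 then show ?case by (auto intro!: eq_matI)
next
  case (Suc N)
  have IH: "bdiag N (\<lambda>i. A (Suc i)) + bdiag N (\<lambda>i. B (Suc i)) = bdiag N (\<lambda>i. A (Suc i) + B (Suc i))"
    using Suc by (intro Suc.IH[of _ "\<lambda>i. r (Suc i)" "\<lambda>i. c (Suc i)"]) auto
  have cA: "bdiag N (\<lambda>i. A (Suc i)) \<in> carrier_mat (\<Sum>i<N. r (Suc i)) (\<Sum>i<N. c (Suc i))"
    using Suc by (intro bdiag_carrier) auto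
  have cB: "bdiag N (\<lambda>i. B (Suc i)) \<in> carrier_mat (\<Sum>i<N. r (Suc i)) (\<Sum>i<N. c (Suc i))"
    using Suc by (intro bdiag_carrier) auto
  have a0: "A 0 \<in> carrier_mat (r 0) (c 0)" and b0: "B 0 \<in> carrier_mat (r 0) (c 0)" using Suc by auto
  have cAB: "bdiag N (\<lambda>i. A (Suc i) + B (Suc i)) \<in> carrier_mat (\<Sum>i<N. r (Suc i)) (\<Sum>i<N. c (Suc i))"
    using Suc.prems by (intro bdiag_carrier add_carrier_mat) auto
  show ?case
    unfolding bdiag_Suc Let_def
    apply (subst add_four_block_mat[OF a0 _ _ cA b0 _ _ cB])
    using a0 b0 cA cB IH cAB by (auto)
qed

lemma bdiag_minus: "(\<And>i. i < N \<Longrightarrow> A i \<in> carrier_mat (r i) (c i)) \<Longrightarrow>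
   (\<And>i. i < N \<Longrightarrow> B i \<in> carrier_mat (r i) (c i)) \<Longrightarrow>
   bdiag N A - bdiag N (B::nat \<Rightarrow> 'a::ab_group_add mat) = bdiag N (\<lambda>i. A i - B i)"
proof (induction N arbitrary: A B r c)
  case 0 then show ?case by (auto intro!: eq_matI)
next
  case (Suc N)
  have IH: "bdiag N (\<lambda>i. A (Suc i)) - bdiag N (\<lambda>i. B (Suc i)) = bdiag N (\<lambda>i. A (Suc i) - B (Suc i))"
    using Suc by (intro Suc.IH[of _ "\<lambda>i. r (Suc i)" "\<lambda>i. c (Suc i)"]) auto
  have cA: "bdiag N (\<lambda>i. A (Suc i)) \<in> carrier_mat (\<Sum>i<N. r (Suc i)) (\<Sum>i<N. c (Suc i))"
    using Suc by (intro bdiag_carrier) auto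
  have cB: "bdiag N (\<lambda>i. B (Suc i)) \<in> carrier_mat (\<Sum>i<N. r (Suc i)) (\<Sum>i<N. c (Suc i))"
    using Suc by (intro bdiag_carrier) auto
  have a0: "A 0 \<in> carrier_mat (r 0) (c 0)" and b0: "B 0 \<in> carrier_mat (r 0) (c 0)" using Suc by auto
  show ?case
    unfolding bdiag_Suc Let_def
    apply (rule eq_matI)
    using a0 b0 cA cB IH[symmetric] by (auto)
qed

lemma bdiag_one: "bdiag N (\<lambda>i. 1\<^sub>m (n i)) = 1\<^sub>m (\<Sum>i<N. n i)"
proof (induction N arbitrary: n)
  case 0 then show ?case by (simp, rule eq_matI, auto)
next
  case (Suc N)
  then show ?case unfolding sum.lessThan_Suc_shift by (simp add: bdiag_Suc Let_def)
qed



lemma vminus_eq: assumes "a \<in> carrier_vec n" "b \<in> carrier_vec n" "c \<in> carrier_vec n"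
  "a - b = (c :: 'a :: ab_group_add vec)" shows "a = c + b"
proof (rule eq_vecI)
  fix i assume "i < dim_vec (c + b)"
  then have i: "i < n" using assms by simp
  have "(a - b) $ i = c $ i" using assms(4) by simp
  then have "a$i - b$i = c$i" using i assms(1-3) by simp
  then show "a$i = (c+b)$i" using i assms(1-3) by (simp add: diff_eq_eq)
qed (use assms in simp)

lemma vplus_minus: assumes "a \<in> carrier_vec n" "b \<in> carrier_vec n" "c \<in> carrier_vec n"
  "a = b + (c :: 'a :: ab_group_add vec)" shows "a - b = c"
proof (rule eq_vecI)
  fix i assume "i < dim_vec c"
  then have i: "i < n" using assms by simp
  have "a $ i = (b + c) $ i" using assms(4) by simp
  then have "a$i = b$i + c$i" using i assms(1-3) by simp
  then show "(a - b)$i = c$i" using i assms(1-3) by simp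
qed (use assms in simp)

lemma core:
  fixes GWV GWD GWU GZV GZD GZU GYV GYD GYU K L Q Y MW MZ :: "rf mat"
  assumes c: "GWV \<in> carrier_mat nW nV" "GWD \<in> carrier_mat nW nD" "GWU \<in> carrier_mat nW nU"
    "GZV \<in> carrier_mat nZ nV" "GZD \<in> carrier_mat nZ nD" "GZU \<in> carrier_mat nZ nU"
    "GYV \<in> carrier_mat nY nV" "GYD \<in> carrier_mat nY nD" "GYU \<in> carrier_mat nY nU"
    "K \<in> carrier_mat nU nY" "L \<in> carrier_mat nV nW" "Q \<in> carrier_mat nY nY" "Y \<in> carrier_mat nV nV"
  and QP: "Q * (1\<^sub>m nY - GYU * K) = 1\<^sub>m nY" and PQ: "(1\<^sub>m nY - GYU * K) * Q = 1\<^sub>m nY"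
  and YS: "Y * (1\<^sub>m nV - L * GWV) = 1\<^sub>m nV" and SY: "(1\<^sub>m nV - L * GWV) * Y = 1\<^sub>m nV"
  and MW: "MW = GWD + GWU * (K * Q * GYD)" and MZ: "MZ = GZD + GZU * (K * Q * GYD)"
  shows "is_closed_loop_map (net_eqs GWV GWD GWU GZV GZD GZU GYV GYD GYU K L) nD
           (MZ + GZV * Y * L * MW)"
proof -
  have cMW: "MW \<in> carrier_mat nW nD" and cMZ: "MZ \<in> carrier_mat nZ nD" unfolding MW MZ using c by auto
  note cc = c cMW cMZ
  have dims: "dim_col GWV = nV" "dim_row GWV = nW" "dim_row GZV = nZ" "dim_row GYV = nY" "dim_col GWU = nU"
    using cc by auto
  have cP: "1\<^sub>m nY - GYU * K \<in> carrier_mat nY nY" and cS: "1\<^sub>m nV - L * GWV \<in> carrier_mat nV nV"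
    using cc by (auto intro!: minus_carrier_mat)
  have T_c: "MZ + GZV * Y * L * MW \<in> carrier_mat nZ nD" using cc by auto
  have main: "\<forall>d \<in> carrier_vec nD. (\<exists>!s. net_eqs GWV GWD GWU GZV GZD GZU GYV GYD GYU K L d s) \<and>
        (\<forall>v w z y u. net_eqs GWV GWD GWU GZV GZD GZU GYV GYD GYU K L d (v, w, z, y, u)
           \<longrightarrow> z = (MZ + GZV * Y * L * MW) *\<^sub>v d)"
  proof
    fix d :: "rf vec" assume d: "d \<in> carrier_vec nD"
    define e0 where "e0 = Q *\<^sub>v (GYD *\<^sub>v d)"
    define u0 where "u0 = K *\<^sub>v e0"
    define v0 where "v0 = Y *\<^sub>v (L *\<^sub>v (MW *\<^sub>v d))"
    define w0 where "w0 = GWV *\<^sub>v v0 + MW *\<^sub>v d"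
    define y0 where "y0 = e0 + GYV *\<^sub>v v0"
    define z0 where "z0 = GZV *\<^sub>v v0 + GZD *\<^sub>v d + GZU *\<^sub>v u0"
    have ce0: "e0 \<in> carrier_vec nY" and cu0: "u0 \<in> carrier_vec nU" and cv0: "v0 \<in> carrier_vec nV"
      and cw0: "w0 \<in> carrier_vec nW" and cy0: "y0 \<in> carrier_vec nY" and cz0: "z0 \<in> carrier_vec nZ"
      unfolding e0_def u0_def v0_def w0_def y0_def z0_def using cc d by auto
    have MWd: "MW *\<^sub>v d = GWD *\<^sub>v d + GWU *\<^sub>v u0"
      unfolding MW u0_def e0_def using cc d by (simp add: add_mult_distrib_mat_vec[of _ nW nD] assoc_mult_mat_vec[of GWU nW nU _ nD] assoc_mult_mat_vec[of K nU nY _ nD] assoc_mult_mat_vec[of Q nY nY _ nD])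
    have MZd: "MZ *\<^sub>v d = GZD *\<^sub>v d + GZU *\<^sub>v u0"
      unfolding MZ u0_def e0_def using cc d by (simp add: add_mult_distrib_mat_vec[of _ nZ nD] assoc_mult_mat_vec[of GZU nZ nU _ nD] assoc_mult_mat_vec[of K nU nY _ nD] assoc_mult_mat_vec[of Q nY nY _ nD])
    have Pe: "(1\<^sub>m nY - GYU * K) *\<^sub>v e = e - GYU *\<^sub>v (K *\<^sub>v e)" if "e \<in> carrier_vec nY" for e
      using cc that by (simp add: minus_mult_distrib_mat_vec[of _ nY nY])
    have Sv: "(1\<^sub>m nV - L * GWV) *\<^sub>v v = v - L *\<^sub>v (GWV *\<^sub>v v)" if "v \<in> carrier_vec nV" for v
      using cc that by (simp add: minus_mult_distrib_mat_vec[of _ nV nV])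
    have Pe0: "e0 - GYU *\<^sub>v (K *\<^sub>v e0) = GYD *\<^sub>v d"
    proof -
      have "(1\<^sub>m nY - GYU * K) *\<^sub>v e0 = ((1\<^sub>m nY - GYU * K) * Q) *\<^sub>v (GYD *\<^sub>v d)"
        unfolding e0_def using cc d by (intro assoc_mult_mat_vec[symmetric, of _ nY nY _ nY]) auto
      also have "\<dots> = GYD *\<^sub>v d" using PQ cc d by simp
      finally show ?thesis using Pe[OF ce0] by simp
    qed
    have Sv0: "v0 - L *\<^sub>v (GWV *\<^sub>v v0) = L *\<^sub>v (MW *\<^sub>v d)"
    proof -
      have "(1\<^sub>m nV - L * GWV) *\<^sub>v v0 = ((1\<^sub>m nV - L * GWV) * Y) *\<^sub>v (L *\<^sub>v (MW *\<^sub>v d))"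
        unfolding v0_def using cc d by (intro assoc_mult_mat_vec[symmetric, of _ nV nV _ nV]) auto
      also have "\<dots> = L *\<^sub>v (MW *\<^sub>v d)" using SY cc d by simp
      finally show ?thesis using Sv[OF cv0] by simp
    qed
    have e0eq: "e0 = GYD *\<^sub>v d + GYU *\<^sub>v u0"
      unfolding u0_def using vminus_eq[OF ce0 _ _ Pe0] cc ce0 d by auto
    have v0eq: "v0 = L *\<^sub>v (MW *\<^sub>v d) + L *\<^sub>v (GWV *\<^sub>v v0)"
      using vminus_eq[OF cv0 _ _ Sv0] cc cv0 d by auto
    have sol: "net_eqs GWV GWD GWU GZV GZD GZU GYV GYD GYU K L d (v0, w0, z0, y0, u0)"
    proof -
      have "w0 = GWV *\<^sub>v v0 + GWD *\<^sub>v d + GWU *\<^sub>v u0"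
        unfolding w0_def MWd using cc cv0 cu0 d by (intro eq_vecI) auto
      moreover have "y0 = GYV *\<^sub>v v0 + GYD *\<^sub>v d + GYU *\<^sub>v u0"
        unfolding y0_def using cc cv0 cu0 d by (subst e0eq, intro eq_vecI) auto
      moreover have "u0 = K *\<^sub>v (y0 - GYV *\<^sub>v v0)"
      proof -
        have "y0 - GYV *\<^sub>v v0 = e0" unfolding y0_def using cc cv0 ce0 by (intro eq_vecI) auto
        then show ?thesis unfolding u0_def by simp
      qed
      moreover have "v0 = L *\<^sub>v w0"
      proof -
        have "L *\<^sub>v w0 = L *\<^sub>v (GWV *\<^sub>v v0) + L *\<^sub>v (MW *\<^sub>v d)"
          unfolding w0_def using cc cv0 d by (simp add: mult_add_distrib_mat_vec[of _ nV nW])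
        moreover have "L *\<^sub>v (GWV *\<^sub>v v0) + L *\<^sub>v (MW *\<^sub>v d) = L *\<^sub>v (MW *\<^sub>v d) + L *\<^sub>v (GWV *\<^sub>v v0)"
          using cc cv0 d by (intro comm_add_vec[of _ nV]) auto
        ultimately show ?thesis using v0eq by simp
      qed
      moreover have "v0 \<in> carrier_vec (dim_col GWV)" "w0 \<in> carrier_vec (dim_row GWV)"
        "z0 \<in> carrier_vec (dim_row GZV)" "y0 \<in> carrier_vec (dim_row GYV)" "u0 \<in> carrier_vec (dim_col GWU)"
        using cc cv0 cw0 cy0 cu0 cz0 by auto
      moreover have "z0 = GZV *\<^sub>v v0 + GZD *\<^sub>v d + GZU *\<^sub>v u0" by (rule z0_def)
      ultimately show ?thesis unfolding net_eqs_def prod.case by blast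
    qed
    have uniq: "s = (v0, w0, z0, y0, u0)" if "net_eqs GWV GWD GWU GZV GZD GZU GYV GYD GYU K L d s" for s
    proof -
      obtain v w z y u where s: "s = (v, w, z, y, u)" by (cases s) auto
      have cv: "v \<in> carrier_vec nV" and cw: "w \<in> carrier_vec nW" and cz: "z \<in> carrier_vec nZ"
        and cy: "y \<in> carrier_vec nY" and cu: "u \<in> carrier_vec nU"
        and ew: "w = GWV *\<^sub>v v + GWD *\<^sub>v d + GWU *\<^sub>v u"
        and ez: "z = GZV *\<^sub>v v + GZD *\<^sub>v d + GZU *\<^sub>v u"
        and ey: "y = GYV *\<^sub>v v + GYD *\<^sub>v d + GYU *\<^sub>v u"
        and eu: "u = K *\<^sub>v (y - GYV *\<^sub>v v)"
        and ev: "v = L *\<^sub>v w"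
        using that unfolding s net_eqs_def prod.case dims by blast+
      define e where "e = y - GYV *\<^sub>v v"
      have ce: "e \<in> carrier_vec nY" unfolding e_def using cy cv cc by auto
      have ee: "e = GYD *\<^sub>v d + GYU *\<^sub>v u" unfolding e_def ey using cc cv cu d
        by (intro eq_vecI) auto
      have Ke: "K *\<^sub>v e = u" using eu unfolding e_def by simp
      have "e - GYU *\<^sub>v u = GYD *\<^sub>v d"
        using cc cu d ce by (subst (1) ee, intro eq_vecI) auto
      then have "e - GYU *\<^sub>v (K *\<^sub>v e) = GYD *\<^sub>v d" unfolding Ke .
      then have "(1\<^sub>m nY - GYU * K) *\<^sub>v e = GYD *\<^sub>v d" using Pe[OF ce] by simp
      then have "Q *\<^sub>v ((1\<^sub>m nY - GYU * K) *\<^sub>v e) = e0" unfolding e0_def by simp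
      moreover have "Q *\<^sub>v ((1\<^sub>m nY - GYU * K) *\<^sub>v e) = e"
        using assoc_mult_mat_vec[symmetric, of Q nY nY "1\<^sub>m nY - GYU * K" nY e] QP cc ce cP by auto
      ultimately have e_e0: "e = e0" by simp
      then have u_u0: "u = u0" using eu unfolding e_def[symmetric] u0_def by simp
      have w_eq: "w = GWV *\<^sub>v v + MW *\<^sub>v d" unfolding ew MWd u_u0 using cc cv cu0 d
        by (intro eq_vecI) auto
      have "L *\<^sub>v w = L *\<^sub>v (GWV *\<^sub>v v) + L *\<^sub>v (MW *\<^sub>v d)"
        unfolding w_eq using cc cv d by (simp add: mult_add_distrib_mat_vec[of _ nV nW])
      then have "v = L *\<^sub>v (GWV *\<^sub>v v) + L *\<^sub>v (MW *\<^sub>v d)" using ev by metis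
      then have "v - L *\<^sub>v (GWV *\<^sub>v v) = L *\<^sub>v (MW *\<^sub>v d)"
        using cc cv d by (intro vplus_minus[of _ nV]) auto
      then have "(1\<^sub>m nV - L * GWV) *\<^sub>v v = L *\<^sub>v (MW *\<^sub>v d)" using Sv[OF cv] by simp
      then have "Y *\<^sub>v ((1\<^sub>m nV - L * GWV) *\<^sub>v v) = v0" unfolding v0_def by simp
      moreover have "Y *\<^sub>v ((1\<^sub>m nV - L * GWV) *\<^sub>v v) = v"
        using assoc_mult_mat_vec[symmetric, of Y nV nV "1\<^sub>m nV - L * GWV" nV v] YS cc cv cS by auto
      ultimately have v_v0: "v = v0" by simp
      have w_w0: "w = w0" unfolding w_eq w0_def v_v0 ..
      have y_y0: "y = y0" unfolding y0_def e_e0[symmetric] e_def v_v0[symmetric] using cy cv cc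
        by (intro eq_vecI) auto
      have z_z0: "z = z0" unfolding ez z0_def v_v0 u_u0 ..
      show ?thesis unfolding s using v_v0 w_w0 z_z0 y_y0 u_u0 by simp
    qed
    have zT: "z0 = (MZ + GZV * Y * L * MW) *\<^sub>v d"
    proof -
      have "(MZ + GZV * Y * L * MW) *\<^sub>v d = MZ *\<^sub>v d + (GZV * Y * L * MW) *\<^sub>v d"
        using cc d by (intro add_mult_distrib_mat_vec[of _ nZ nD]) auto
      also have "(GZV * Y * L * MW) *\<^sub>v d = GZV *\<^sub>v v0"
      proof -
        have "(GZV * Y * L * MW) *\<^sub>v d = (GZV * Y * L) *\<^sub>v (MW *\<^sub>v d)"
          by (rule assoc_mult_mat_vec[of _ nZ nW _ nD]) (use cc d in auto)
        also have "\<dots> = (GZV * Y) *\<^sub>v (L *\<^sub>v (MW *\<^sub>v d))"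
          by (rule assoc_mult_mat_vec[of _ nZ nV _ nW]) (use cc d in auto)
        also have "\<dots> = GZV *\<^sub>v (Y *\<^sub>v (L *\<^sub>v (MW *\<^sub>v d)))"
          by (rule assoc_mult_mat_vec[of _ nZ nV _ nV]) (use cc d in auto)
        finally show ?thesis unfolding v0_def .
      qed
      finally show ?thesis unfolding MZd z0_def using cc d cv0 cu0 by (intro eq_vecI) auto
    qed
    show "(\<exists>!s. net_eqs GWV GWD GWU GZV GZD GZU GYV GYD GYU K L d s) \<and>
        (\<forall>v w z y u. net_eqs GWV GWD GWU GZV GZD GZU GYV GYD GYU K L d (v, w, z, y, u)
           \<longrightarrow> z = (MZ + GZV * Y * L * MW) *\<^sub>v d)"
      using sol uniq zT by blast
  qed
  show ?thesis unfolding is_closed_loop_map_def using main T_c by auto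
qed



lemma minv_props: assumes "invertible_mat A" "A \<in> carrier_mat n n"
  shows "minv A \<in> carrier_mat n n" "A * minv A = 1\<^sub>m n" "minv A * A = 1\<^sub>m n"
proof -
  have "\<exists>B. inverts_mat A B \<and> inverts_mat B A" using assms(1) unfolding invertible_mat_def by blast
  then have h: "inverts_mat A (minv A) \<and> inverts_mat (minv A) A" unfolding minv_def by (rule someI_ex)
  then have h1: "A * minv A = 1\<^sub>m n" and h2: "minv A * A = 1\<^sub>m (dim_row (minv A))"
    using assms(2) unfolding inverts_mat_def by auto
  have "dim_col (A * minv A) = n" using h1 by simp
  then have c: "dim_col (minv A) = n" by simp
  have "dim_col (minv A * A) = dim_row (minv A)" using h2 by simp
  then have r: "dim_row (minv A) = n" using assms(2) by simp
  show "minv A \<in> carrier_mat n n" using c r by auto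
  show "A * minv A = 1\<^sub>m n" by (rule h1)
  show "minv A * A = 1\<^sub>m n" using h2 r by simp
qed

lemma minv_unique: assumes "A \<in> carrier_mat n n" "B \<in> carrier_mat n n" "A * B = 1\<^sub>m n" "B * A = 1\<^sub>m n"
  shows "invertible_mat A"
  using assms unfolding invertible_mat_def inverts_mat_def square_mat.simps by auto

lemma push_through_inv:
  fixes G L Z :: "'a :: comm_ring_1 mat"
  assumes cG: "G \<in> carrier_mat m n" and cL: "L \<in> carrier_mat n m" and cZ: "Z \<in> carrier_mat m m"
    and ZR: "(1\<^sub>m m - G * L) * Z = 1\<^sub>m m" and ZL: "Z * (1\<^sub>m m - G * L) = 1\<^sub>m m"
  shows "invertible_mat (1\<^sub>m n - L * G)"
proof -
  define S where "S = 1\<^sub>m n - L * G"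
  define R where "R = 1\<^sub>m m - G * L"
  define T where "T = 1\<^sub>m n + L * Z * G"
  have cS: "S \<in> carrier_mat n n" and cR: "R \<in> carrier_mat m m" and cT: "T \<in> carrier_mat n n"
    unfolding S_def R_def T_def using cG cL cZ by auto
  have cLG: "L * G \<in> carrier_mat n n" and cGL: "G * L \<in> carrier_mat m m" and cZG: "Z * G \<in> carrier_mat m n"
    and cLZ: "L * Z \<in> carrier_mat n m"
    using cG cL cZ by auto
  have SL: "S * L = L * R"
  proof -
    have "S * L = 1\<^sub>m n * L - L * G * L" unfolding S_def
      using cG cL by (intro minus_mult_distrib_mat[of _ n n]) auto
    also have "\<dots> = L - L * (G * L)" using cG cL by (simp add: assoc_mult_mat[of L n m G n L m])
    also have "\<dots> = L * 1\<^sub>m m - L * (G * L)" using cL by simp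
    also have "\<dots> = L * R" unfolding R_def using cG cL by (intro mult_minus_distrib_mat[symmetric, of _ n m]) auto
    finally show ?thesis .
  qed
  have GS: "G * S = R * G"
  proof -
    have "G * S = G * 1\<^sub>m n - G * (L * G)" unfolding S_def
      using cG cL by (intro mult_minus_distrib_mat[of _ m n]) auto
    also have "\<dots> = G - G * L * G" using cG cL by (simp add: assoc_mult_mat[of G m n L m G n])
    also have "\<dots> = 1\<^sub>m m * G - G * L * G" using cG by simp
    also have "\<dots> = R * G" unfolding R_def using cG cL by (intro minus_mult_distrib_mat[symmetric, of _ m m]) auto
    finally show ?thesis .
  qed
  have ST: "S * T = 1\<^sub>m n"
  proof -
    have "S * T = S * 1\<^sub>m n + S * (L * Z * G)" unfolding T_def
      using cS cL cZ cG by (intro mult_add_distrib_mat[of _ n n]) auto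
    also have "S * (L * Z * G) = (S * L) * (Z * G)"
      using cS cL cZ cG by (simp add: assoc_mult_mat[of L n m Z m G n] assoc_mult_mat[of S n n L m "Z * G" n])
    also have "\<dots> = L * (R * Z) * G" unfolding SL
      using cR cL cZ cG by (simp add: assoc_mult_mat[of L n m R m "Z * G" n] assoc_mult_mat[of R m m Z m G n]
        assoc_mult_mat[of L n m "R * Z" m G n])
    also have "\<dots> = L * G" using ZR cL cG unfolding R_def by simp
    finally have "S * T = S + L * G" using cS by simp
    also have "\<dots> = 1\<^sub>m n" unfolding S_def using cLG cL cG by (intro eq_matI) (auto simp: index_add_mat index_minus_mat)
    finally show ?thesis .
  qed
  have TS: "T * S = 1\<^sub>m n"
  proof -
    have "T * S = 1\<^sub>m n * S + (L * Z * G) * S" unfolding T_def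
      using cS cL cZ cG by (intro add_mult_distrib_mat[of _ n n]) auto
    also have "(L * Z * G) * S = (L * Z) * (G * S)"
      by (rule assoc_mult_mat[of "L * Z" n m G n S n]) (use cS cL cZ cG in auto)
    also have "\<dots> = L * (Z * R) * G" unfolding GS
    proof -
      have "L * Z * (R * G) = L * Z * R * G"
        by (rule assoc_mult_mat[of "L * Z" n m R m G n, symmetric]) (use cR cL cZ cG in auto)
      also have "L * Z * R = L * (Z * R)"
        by (rule assoc_mult_mat[of L n m Z m R m]) (use cR cL cZ cG in auto)
      finally show "L * Z * (R * G) = L * (Z * R) * G" .
    qed
    also have "\<dots> = L * G" using ZL cL cG unfolding R_def by simp
    finally have "T * S = S + L * G" using cS by simp
    also have "\<dots> = 1\<^sub>m n" unfolding S_def using cLG cL cG by (intro eq_matI) (auto simp: index_add_mat index_minus_mat)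
    finally show ?thesis .
  qed
  show ?thesis using minv_unique[OF cS cT ST TS] unfolding S_def .
qed



lemma bdiag_cong: "(\<And>i. i < N \<Longrightarrow> A i = B i) \<Longrightarrow> bdiag N A = bdiag N B"
  unfolding bdiag_def by (rule foldr_cong) auto

theorem proposition3:
  fixes N :: nat
    and nv nd nu nw nz ny :: "nat \<Rightarrow> nat"
    and Gwv Gwd Gwu Gzv Gzd Gzu Gyv Gyd Gyu Khat :: "nat \<Rightarrow> rf mat"
    and L :: "rf mat"
  assumes dims: "\<forall>i<N.
      Gwv i \<in> carrier_mat (nw i) (nv i) \<and> Gwd i \<in> carrier_mat (nw i) (nd i) \<and>
      Gwu i \<in> carrier_mat (nw i) (nu i) \<and>
      Gzv i \<in> carrier_mat (nz i) (nv i) \<and> Gzd i \<in> carrier_mat (nz i) (nd i) \<and>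
      Gzu i \<in> carrier_mat (nz i) (nu i) \<and>
      Gyv i \<in> carrier_mat (ny i) (nv i) \<and> Gyd i \<in> carrier_mat (ny i) (nd i) \<and>
      Gyu i \<in> carrier_mat (ny i) (nu i) \<and>
      Khat i \<in> carrier_mat (nu i) (ny i)"
    and proper_G: "\<forall>i<N.
      proper_mat (Gwv i) \<and> proper_mat (Gwd i) \<and> proper_mat (Gwu i) \<and>
      proper_mat (Gzv i) \<and> proper_mat (Gzd i) \<and> proper_mat (Gzu i) \<and>
      proper_mat (Gyv i) \<and> proper_mat (Gyd i) \<and> proper_mat (Gyu i)"
    and proper_K: "\<forall>i<N. proper_mat (Khat i)"
    and stab_K: "\<forall>i<N. int_stable_fb (Gyu i) (Khat i)"
    and L_dim: "L \<in> carrier_mat (\<Sum>i<N. nv i) (\<Sum>i<N. nw i)"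
    and proper_L: "proper_mat L"
    and pre_stable: "int_stable_fb (bdiag N Gwv) L"
  shows "is_closed_loop_map
           (net_eqs (bdiag N Gwv) (bdiag N Gwd) (bdiag N Gwu)
                    (bdiag N Gzv) (bdiag N Gzd) (bdiag N Gzu)
                    (bdiag N Gyv) (bdiag N Gyd) (bdiag N Gyu) (bdiag N Khat) L)
           (\<Sum>i<N. nd i)
           (bdiag N (\<lambda>i. Mhat (Gzd i) (Gzu i) (Gyu i) (Gyd i) (Khat i))
            + bdiag N Gzv * minv (1\<^sub>m (\<Sum>i<N. nv i) - L * bdiag N Gwv) * L
              * bdiag N (\<lambda>i. Mhat (Gwd i) (Gwu i) (Gyu i) (Gyd i) (Khat i)))"
proof -
  define nV where "nV = (\<Sum>i<N. nv i)"
  define nW where "nW = (\<Sum>i<N. nw i)"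
  define nD where "nD = (\<Sum>i<N. nd i)"
  define nU where "nU = (\<Sum>i<N. nu i)"
  define nZ where "nZ = (\<Sum>i<N. nz i)"
  define nY where "nY = (\<Sum>i<N. ny i)"
  define X where "X i = minv (1\<^sub>m (ny i) - Gyu i * Khat i)" for i
  define P where "P i = 1\<^sub>m (ny i) - Gyu i * Khat i" for i
  have cP: "P i \<in> carrier_mat (ny i) (ny i)" if "i < N" for i
    using dims that unfolding P_def by (intro minus_carrier_mat mult_carrier_mat) auto
  have invP: "invertible_mat (P i)" if "i < N" for i
  proof -
    have "invertible_mat (1\<^sub>m (dim_row (Gyu i)) - Gyu i * Khat i)"
      using stab_K that unfolding int_stable_fb_def by auto
    then show ?thesis unfolding P_def using dims that by auto
  qed
  have cX: "X i \<in> carrier_mat (ny i) (ny i)" and XP: "X i * P i = 1\<^sub>m (ny i)" and PX: "P i * X i = 1\<^sub>m (ny i)"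
    if "i < N" for i
    using minv_props[OF invP[OF that] cP[OF that]] unfolding X_def P_def[symmetric] by auto
  note d = dims[rule_format]
  have cGK: "Gyu i * Khat i \<in> carrier_mat (ny i) (ny i)" if "i < N" for i
    using d[OF that] by (meson mult_carrier_mat)
  have cKX: "Khat i * X i \<in> carrier_mat (nu i) (ny i)" if "i < N" for i
    using d[OF that] cX[OF that] by (meson mult_carrier_mat)
  have cKXG: "Khat i * X i * Gyd i \<in> carrier_mat (nu i) (nd i)" if "i < N" for i
    using d[OF that] cKX[OF that] by (meson mult_carrier_mat)
  have cGWV: "bdiag N Gwv \<in> carrier_mat nW nV" unfolding nW_def nV_def by (rule bdiag_carrier) (use d in auto)
  have cGWD: "bdiag N Gwd \<in> carrier_mat nW nD" unfolding nW_def nD_def by (rule bdiag_carrier) (use d in auto)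
  have cGWU: "bdiag N Gwu \<in> carrier_mat nW nU" unfolding nW_def nU_def by (rule bdiag_carrier) (use d in auto)
  have cGZV: "bdiag N Gzv \<in> carrier_mat nZ nV" unfolding nZ_def nV_def by (rule bdiag_carrier) (use d in auto)
  have cGZD: "bdiag N Gzd \<in> carrier_mat nZ nD" unfolding nZ_def nD_def by (rule bdiag_carrier) (use d in auto)
  have cGZU: "bdiag N Gzu \<in> carrier_mat nZ nU" unfolding nZ_def nU_def by (rule bdiag_carrier) (use d in auto)
  have cGYV: "bdiag N Gyv \<in> carrier_mat nY nV" unfolding nY_def nV_def by (rule bdiag_carrier) (use d in auto)
  have cGYD: "bdiag N Gyd \<in> carrier_mat nY nD" unfolding nY_def nD_def by (rule bdiag_carrier) (use d in auto)
  have cGYU: "bdiag N Gyu \<in> carrier_mat nY nU" unfolding nY_def nU_def by (rule bdiag_carrier) (use d in auto)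
  have cK: "bdiag N Khat \<in> carrier_mat nU nY" unfolding nY_def nU_def by (rule bdiag_carrier) (use d in auto)
  have cQ: "bdiag N X \<in> carrier_mat nY nY" unfolding nY_def by (rule bdiag_carrier) (use cX in auto)
  have cL: "L \<in> carrier_mat nV nW" using L_dim unfolding nV_def nW_def .
  have PB: "1\<^sub>m nY - bdiag N Gyu * bdiag N Khat = bdiag N P"
  proof -
    have e1: "bdiag N Gyu * bdiag N Khat = bdiag N (\<lambda>i. Gyu i * Khat i)"
      by (rule bdiag_mult[of N Gyu ny nu Khat ny]) (use d in auto)
    have e2: "1\<^sub>m nY = bdiag N (\<lambda>i. 1\<^sub>m (ny i))" unfolding nY_def by (rule bdiag_one[symmetric])
    show ?thesis unfolding P_def e1 e2
      by (rule bdiag_minus[of N _ ny ny]) (use d cGK in auto)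
  qed
  have QP: "bdiag N X * (1\<^sub>m nY - bdiag N Gyu * bdiag N Khat) = 1\<^sub>m nY"
  proof -
    have "bdiag N X * bdiag N P = bdiag N (\<lambda>i. X i * P i)"
      by (rule bdiag_mult[of N X ny ny P ny]) (use cX cP in auto)
    also have "\<dots> = bdiag N (\<lambda>i. 1\<^sub>m (ny i))" by (rule bdiag_cong) (use XP in auto)
    finally have "bdiag N X * bdiag N P = 1\<^sub>m nY" unfolding nY_def bdiag_one .
    then show ?thesis unfolding PB .
  qed
  have PQ: "(1\<^sub>m nY - bdiag N Gyu * bdiag N Khat) * bdiag N X = 1\<^sub>m nY"
  proof -
    have "bdiag N P * bdiag N X = bdiag N (\<lambda>i. P i * X i)"
      by (rule bdiag_mult[of N P ny ny X ny]) (use cX cP in auto)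
    also have "\<dots> = bdiag N (\<lambda>i. 1\<^sub>m (ny i))" by (rule bdiag_cong) (use PX in auto)
    finally have "bdiag N P * bdiag N X = 1\<^sub>m nY" unfolding nY_def bdiag_one .
    then show ?thesis unfolding PB .
  qed
  have Mgen: "bdiag N (\<lambda>i. Mhat (Ad i) (Au i) (Gyu i) (Gyd i) (Khat i)) = bdiag N Ad + bdiag N Au * (bdiag N Khat * bdiag N X * bdiag N Gyd)"
    if cAd: "\<And>i. i < N \<Longrightarrow> Ad i \<in> carrier_mat (na i) (nd i)"
    and cAu: "\<And>i. i < N \<Longrightarrow> Au i \<in> carrier_mat (na i) (nu i)" for Ad Au na
  proof -
    have "bdiag N Khat * bdiag N X = bdiag N (\<lambda>i. Khat i * X i)"
      by (rule bdiag_mult[of N Khat nu ny X ny]) (use d cX cKX cKXG in auto)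
    moreover have "bdiag N (\<lambda>i. Khat i * X i) * bdiag N Gyd = bdiag N (\<lambda>i. Khat i * X i * Gyd i)"
      by (rule bdiag_mult[of N _ nu ny Gyd nd]) (use d cX cKX cKXG in auto)
    moreover have "bdiag N Au * bdiag N (\<lambda>i. Khat i * X i * Gyd i) = bdiag N (\<lambda>i. Au i * (Khat i * X i * Gyd i))"
      by (rule bdiag_mult[of N Au na nu _ nd]) (use d cX cKX cKXG cAu in auto)
    moreover have "bdiag N Ad + bdiag N (\<lambda>i. Au i * (Khat i * X i * Gyd i)) = bdiag N (\<lambda>i. Ad i + Au i * (Khat i * X i * Gyd i))"
      by (rule bdiag_add[of N Ad na nd]) (use cKXG cAu cAd in \<open>meson mult_carrier_mat\<close>)+
    moreover have "bdiag N (\<lambda>i. Mhat (Ad i) (Au i) (Gyu i) (Gyd i) (Khat i)) = bdiag N (\<lambda>i. Ad i + Au i * (Khat i * X i * Gyd i))"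
    proof (rule bdiag_cong)
      fix i assume i: "i < N"
      have "Au i * Khat i * X i * Gyd i = Au i * (Khat i * X i * Gyd i)"
      proof -
        have "Au i * Khat i * X i = Au i * (Khat i * X i)"
          by (rule assoc_mult_mat[of _ "na i" "nu i" _ "ny i" _ "ny i"]) (use d[OF i] cX[OF i] cAu[OF i] in auto)
        moreover have "Au i * (Khat i * X i) * Gyd i = Au i * (Khat i * X i * Gyd i)"
          by (rule assoc_mult_mat[of _ "na i" "nu i" _ "ny i" _ "nd i"]) (use d[OF i] cKX[OF i] cAu[OF i] in auto)
        ultimately show ?thesis by simp
      qed
      then show "Mhat (Ad i) (Au i) (Gyu i) (Gyd i) (Khat i) = Ad i + Au i * (Khat i * X i * Gyd i)"
      proof -
        have "dim_row (Gyu i) = ny i" using d[OF i] by auto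
        then show ?thesis unfolding Mhat_def X_def using \<open>Au i * Khat i * X i * Gyd i = Au i * (Khat i * X i * Gyd i)\<close>
          unfolding X_def by simp
      qed
    qed
    ultimately show ?thesis by simp
  qed
  have MW: "bdiag N (\<lambda>i. Mhat (Gwd i) (Gwu i) (Gyu i) (Gyd i) (Khat i)) = bdiag N Gwd + bdiag N Gwu * (bdiag N Khat * bdiag N X * bdiag N Gyd)"
    by (rule Mgen[of Gwd nw Gwu]) (use d in auto)
  have MZ: "bdiag N (\<lambda>i. Mhat (Gzd i) (Gzu i) (Gyu i) (Gyd i) (Khat i)) = bdiag N Gzd + bdiag N Gzu * (bdiag N Khat * bdiag N X * bdiag N Gyd)"
    by (rule Mgen[of Gzd nz Gzu]) (use d in auto)
  define Z where "Z = minv (1\<^sub>m nW - bdiag N Gwv * L)"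
  have invR: "invertible_mat (1\<^sub>m nW - bdiag N Gwv * L)"
    using pre_stable cGWV unfolding int_stable_fb_def by auto
  have cR: "1\<^sub>m nW - bdiag N Gwv * L \<in> carrier_mat nW nW" using cGWV cL by auto
  note Zp = minv_props[OF invR cR, folded Z_def]
  have invS: "invertible_mat (1\<^sub>m nV - L * bdiag N Gwv)"
    by (rule push_through_inv[OF cGWV cL Zp(1) Zp(2) Zp(3)])
  have cS: "1\<^sub>m nV - L * bdiag N Gwv \<in> carrier_mat nV nV" using cGWV cL by auto
  note Yp = minv_props[OF invS cS]
  show ?thesis
    unfolding nD_def[symmetric] nV_def[symmetric]
    by (rule core[OF cGWV cGWD cGWU cGZV cGZD cGZU cGYV cGYD cGYU cK cL cQ Yp(1) QP PQ Yp(3) Yp(2) MW MZ])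
qed

end
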